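(* Let $n,d$ be positive integers, $y_1,\dots,y_n\in\{-1,1\}$ and $\bar{x}_1,\dots,\bar{x}_n\in\mathbb{R}^{d+1}$ (no probabilistic assumptions). Let $H:\mathbb{R}^{d+1}\to\mathbb{R}^{(d+1)\times(d+1)}$ be $H(\theta)=\sum_{i=1}^n\psi(y_i\bar{x}_i\cdot\theta)\,\bar{x}_i\bar{x}_i^{\top}$, where $\psi(z)=\frac{\phi(z)}{\Phi(z)}\big(z+\frac{\phi(z)}{\Phi(z)}\big)$, and let $$L=\sup_{\theta\in\mathbb{R}^{d+1}}\lambda_{\max}(H(\theta)),\qquad m=\inf_{\theta\in\mathbb{R}^{d+1}}\lambda_{\min}(H(\theta)).$$ Define, for integers $s\in[0,n]$, $$P(s)=\inf_{v\in\mathbb{S}^d}\min_{I\subset\{1,\dots,n\}:|I|=s}\sum_{i\in I}|\bar{x}_i\cdot v|^2,\qquad s^*=\inf_{u\in\mathbb{S}^d}\sum_{i=1}^n\mathds{1}_{(-\infty,0]}(y_i\bar{x}_i\cdot u).$$ Then: (i) $L/m<\infty$ if and only if $\mathrm{Span}((\bar{x}_i)_{i\in I_u})=\mathbb{R}^{d+1}$ for every $u\in\mathbb{S}^d$, where $I_u=\{i\in\{1,\dots,n\}: y_i\bar{x}_i\cdot u\le 0\}$. (ii) If $(\bar{x}_i)_{i\in I}$ spans $\mathbb{R}^{d+1}$ for every $I\subset\{1,\dots,n\}$ with $|I|>d$, then $L/m<\infty$ if and only if $s^*>d$. (iii) $L/m\le \frac{\pi}{2}\,\lambda_{\max}\big(\sum_{i=1}^n\bar{x}_i\bar{x}_i^{\top}\big)/P(s^*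 )$.
   Context: $\Phi$ and $\phi$ denote the c.d.f. and p.d.f. of the standard normal distribution. $\mathbb{S}^d=\{v\in\mathbb{R}^{d+1}:|v|=1\}$. $\lambda_{\max},\lambda_{\min}$ are the largest and smallest eigenvalues of a symmetric positive semidefinite matrix. The ratio $L/m\in[1,\infty]$ is called the condition number, with $L/m=\infty$ when $m=0$. $H$ is the Hessian of the probit negative log-likelihood $\theta\mapsto-\sum_{i=1}^n\ln\Phi(y_i\bar{x}_i\cdot\theta)$. *)

theory Defs
  imports "HOL-Probability.Probability"
begin

definition std_phi :: "real \<Rightarrow> real" where
  "std_phi z = std_normal_density z"

definition std_Phi :: "real \<Rightarrow> real" where
  "std_Phi z = (LINT t:{..z}|lborel. std_normal_density t)"

definition psi :: "real \<Rightarrow> real" where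
  "psi z = std_phi z / std_Phi z * (z + std_phi z / std_Phi z)"

definition outer :: "real^'n \<Rightarrow> real^'n^'n" where
  "outer v = (\<chi> i j. v $ i * v $ j)"

definition eigenvalues :: "real^'n^'n \<Rightarrow> real set" where
  "eigenvalues A = {c. \<exists>v. v \<noteq> 0 \<and> A *v v = c *\<^sub>R v}"

definition lambda_max :: "real^'n^'n \<Rightarrow> real" where
  "lambda_max A = Max (eigenvalues A)"

definition lambda_min :: "real^'n^'n \<Rightarrow> real" where
  "lambda_min A = Min (eigenvalues A)"

text \<open>Hessian of the probit negative log-likelihood; data indexed by i < N.\<close>
definition hess :: "nat \<Rightarrow> (nat \<Rightarrow> real) \<Rightarrow> (nat \<Rightarrow> real^'n) \<Rightarrow> real^'n \<Rightarrow> real^'n^'n" where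
  "hess N y x \<theta> = (\<Sum>i<N. psi (y i * (x i \<bullet> \<theta>)) *\<^sub>R outer (x i))"

definition L_const :: "nat \<Rightarrow> (nat \<Rightarrow> real) \<Rightarrow> (nat \<Rightarrow> real^'n) \<Rightarrow> real" where
  "L_const N y x = (SUP \<theta>. lambda_max (hess N y x \<theta>))"

definition m_const :: "nat \<Rightarrow> (nat \<Rightarrow> real) \<Rightarrow> (nat \<Rightarrow> real^'n) \<Rightarrow> real" where
  "m_const N y x = (INF \<theta>. lambda_min (hess N y x \<theta>))"

definition cond_num :: "nat \<Rightarrow> (nat \<Rightarrow> real) \<Rightarrow> (nat \<Rightarrow> real^'n) \<Rightarrow> ereal" where
  "cond_num N y x = (if m_const N y x = 0 then \<infinity>
                     else ereal (L_const N y x / m_const N y x))"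

definition P_fun :: "nat \<Rightarrow> (nat \<Rightarrow> real^'n) \<Rightarrow> nat \<Rightarrow> real" where
  "P_fun N x s = (INF v\<in>sphere 0 1.
      Min ((\<lambda>I. \<Sum>i\<in>I. \<bar>x i \<bullet> v\<bar>\<^sup>2) ` {I. I \<subseteq> {..<N} \<and> card I = s}))"

definition s_star :: "nat \<Rightarrow> (nat \<Rightarrow> real) \<Rightarrow> (nat \<Rightarrow> real^'n) \<Rightarrow> nat" where
  "s_star N y x = (INF u\<in>(sphere 0 1 :: (real^'n) set).
      (\<Sum>i<N. (indicator {..0::real} (y i * (x i \<bullet> u)) :: nat)))"

definition I_u :: "nat \<Rightarrow> (nat \<Rightarrow> real) \<Rightarrow> (nat \<Rightarrow> real^'n) \<Rightarrow> real^'n \<Rightarrow> nat set" where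
  "I_u N y x u = {i. i < N \<and> y i * (x i \<bullet> u) \<le> 0}"

end

theory Submission
  imports Defs "HOL-Real_Asymp.Real_Asymp"
begin


lemma phi_eq: "std_phi z = exp (- z\<^sup>2 / 2) / sqrt (2 * pi)"
  by (simp add: std_phi_def std_normal_density_def)

lemma Phi_cdf: "std_Phi z = cdf std_normal_distribution z"
proof -
  have "cdf std_normal_distribution z = measure std_normal_distribution {..z}" by (simp add: cdf_def)
  also have "\<dots> = integral\<^sup>L std_normal_distribution (indicator {..z})"
    by (simp add: prob_space.emeasure_space_1[OF prob_space_normal_density])
  also have "\<dots> = integral\<^sup>L lborel (\<lambda>t. std_normal_density t *\<^sub>R indicator {..z} t)"
    by (subst integral_density) auto
  also have "\<dots> = std_Phi z"
    by (simp add: std_Phi_def set_lebesgue_integral_def mult.commute)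
  finally show ?thesis by simp
qed

lemma Phi_diff: assumes "a < b" shows "std_Phi b - std_Phi a = integral {a..b} std_phi"
proof -
  interpret real_distribution std_normal_distribution by (rule real_dist_normal_dist)
  have "std_Phi b - std_Phi a = measure std_normal_distribution {a<..b}"
    unfolding Phi_cdf using assms by (rule cdf_diff_eq)
  also have "\<dots> = integral\<^sup>L std_normal_distribution (indicator {a<..b})"
    by simp
  also have "\<dots> = integral\<^sup>L lborel (\<lambda>t. std_normal_density t *\<^sub>R indicator {a<..b} t)"
    by (subst integral_density) auto
  also have "\<dots> = (LINT t:{a<..b}|lborel. std_phi t)"
    by (simp add: std_phi_def set_lebesgue_integral_def mult.commute)
  also have "\<dots> = integral {a<..b} std_phi"
  proof (rule set_borel_integral_eq_integral)
    show "set_integrable lborel {a<..b} std_phi"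
      unfolding set_integrable_def std_phi_def
      by (rule integrable_mult_indicator) auto
  qed
  also have "\<dots> = integral {a..b} std_phi"
  proof (rule integral_spike_set)
    show "negligible {x \<in> {a<..b} - {a..b}. std_phi x \<noteq> 0}" by (rule negligible_subset[of "{}"]) auto
    show "negligible {x \<in> {a..b} - {a<..b}. std_phi x \<noteq> 0}"
      by (rule negligible_subset[of "{a}"]) auto
  qed
  finally show ?thesis .
qed

lemma phi_cont: "continuous_on S std_phi"
  unfolding phi_eq[abs_def] by (intro continuous_intros) auto

lemma phi_pos: "std_phi z > 0"
  unfolding phi_eq by simp

lemma phi_deriv: "DERIV std_phi z :> - z * std_phi z"
  unfolding phi_eq[abs_def]
  by (auto intro!: derivative_eq_intros simp: power2_eq_square field_simps)

lemma Phi_deriv: "DERIV std_Phi t :> std_phi t"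
proof -
  let ?a = "t - 1" and ?b = "t + 1"
  have "((\<lambda>x. integral {?a..x} std_phi) has_real_derivative std_phi t) (at t within {?a..?b})"
    by (rule integral_has_real_derivative) (auto intro: phi_cont)
  then have d: "((\<lambda>x. integral {?a..x} std_phi) has_real_derivative std_phi t) (at t)"
    by (simp add: at_within_Icc_at)
  have "((\<lambda>x. std_Phi ?a + integral {?a..x} std_phi) has_real_derivative std_phi t) (at t)"
    using DERIV_add[OF DERIV_const d] by simp
  then show ?thesis
  proof (rule has_field_derivative_transform_within_open[where S="{?a<..<?b}"])
    fix x assume "x \<in> {?a<..<?b}"
    then show "std_Phi ?a + integral {?a..x} std_phi = std_Phi x"
      using Phi_diff[of ?a x] by auto
  qed auto
qed

lemma Phi_fun: "std_Phi = cdf std_normal_distribution"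
  using Phi_cdf by auto

lemma Phi_bot: "(std_Phi \<longlongrightarrow> 0) at_bot"
proof -
  interpret real_distribution std_normal_distribution by (rule real_dist_normal_dist)
  show ?thesis unfolding Phi_fun by (rule cdf_lim_at_bot)
qed

lemma Phi_top: "(std_Phi \<longlongrightarrow> 1) at_top"
proof -
  interpret real_distribution std_normal_distribution by (rule real_dist_normal_dist)
  show ?thesis unfolding Phi_fun by (rule cdf_lim_at_top_prob)
qed

lemma Phi_nonneg: "std_Phi z \<ge> 0"
proof -
  interpret real_distribution std_normal_distribution by (rule real_dist_normal_dist)
  show ?thesis unfolding Phi_fun by (rule cdf_nonneg)
qed

lemma Phi_pos: "std_Phi z > 0"
proof -
  have "std_Phi (z - 1) < std_Phi z"
    by (rule DERIV_pos_imp_increasing[of "z - 1"]) (auto intro: Phi_deriv phi_pos)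
  then show ?thesis using Phi_nonneg[of "z - 1"] by linarith
qed

lemma Phi_sym: "std_Phi z + std_Phi (- z) = 1"
proof -
  have D: "DERIV (\<lambda>w. std_Phi w + std_Phi (- w)) w :> 0" for w
  proof -
    have d2: "DERIV (\<lambda>w. std_Phi (- w)) w :> std_phi (- w) * (- 1)"
      by (rule DERIV_chain2[OF Phi_deriv]) (auto intro!: derivative_eq_intros)
    have "DERIV (\<lambda>w. std_Phi w + std_Phi (- w)) w :> std_phi w + std_phi (- w) * (- 1)"
      by (rule DERIV_add[OF Phi_deriv d2])
    then show "DERIV (\<lambda>w. std_Phi w + std_Phi (- w)) w :> 0"
      by (simp add: phi_eq)
  qed
  have c: "\<And>w. std_Phi w + std_Phi (- w) = std_Phi z + std_Phi (- z)"
  proof -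
    fix w
    have "\<forall>x. DERIV (\<lambda>w. std_Phi w + std_Phi (- w)) x :> 0" using D by simp
    from DERIV_isconst_all[OF this] show "std_Phi w + std_Phi (- w) = std_Phi z + std_Phi (- z)" .
  qed
  have "((\<lambda>w. std_Phi w + std_Phi (- w)) \<longlongrightarrow> 1 + 0) at_top"
  proof (rule tendsto_add[OF Phi_top])
    show "((\<lambda>w. std_Phi (- w)) \<longlongrightarrow> 0) at_top"
      by (rule filterlim_compose[OF Phi_bot filterlim_uminus_at_bot_at_top])
  qed
  moreover have e: "(\<lambda>w. std_Phi w + std_Phi (- w)) = (\<lambda>w::real. std_Phi z + std_Phi (- z))"
    by (rule ext) (rule c)
  ultimately have "((\<lambda>w::real. std_Phi z + std_Phi (- z)) \<longlongrightarrow> 1 + 0) at_top" by (simp only:)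
  then have "std_Phi z + std_Phi (- z) = 1 + 0" by (rule tendsto_const_iff[THEN iffD1, rotated]) simp
  then show ?thesis by simp
qed

lemma Phi_0: "std_Phi 0 = 1/2"
  using Phi_sym[of 0] by simp

lemma phi_0: "std_phi 0 = 1 / sqrt (2 * pi)"
  by (simp add: phi_eq)



lemma pos_sq: "c > 0 \<Longrightarrow> 0 < z\<^sup>2 + (c::real)"
  using zero_le_power2[of z] by linarith

lemma sq_gt: assumes "c > 0" shows "sqrt (z\<^sup>2 + c) > z" "sqrt (z\<^sup>2 + c) > - z" "sqrt (z\<^sup>2 + c) > 0"
proof -
  have "\<bar>z\<bar> < sqrt (z\<^sup>2 + c)"
    using assms by (intro real_less_rsqrt) (simp add: power2_abs)
  then show "sqrt (z\<^sup>2 + c) > z" "sqrt (z\<^sup>2 + c) > - z" "sqrt (z\<^sup>2 + c) > 0"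
    using pos_sq[OF assms, of z] by auto
qed

lemma sq_sq: assumes "c > 0" shows "(sqrt (z\<^sup>2 + c))\<^sup>2 = z\<^sup>2 + c"
  using pos_sq[OF assms, of z] by simp

lemma div_helper: fixes A D p B :: real
  assumes "D \<noteq> 0" "A - p * D = B" shows "A / D - p = B / D"
  using assms by (auto simp: field_simps)

lemma G_deriv:
  assumes c: "c > 0"
  shows "DERIV (\<lambda>z. std_phi z / ((sqrt (z\<^sup>2 + c) - z) / 2) - std_Phi z) z :>
           std_phi z * ((1 - z / sqrt (z\<^sup>2 + c)) / 2 - c / 4) / ((sqrt (z\<^sup>2 + c) - z) / 2)\<^sup>2"
proof -
  define s where "s = sqrt (z\<^sup>2 + c)"
  have s: "s > z" "s > - z" "s > 0" using sq_gt[OF c] by (auto simp: s_def)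
  have ss: "s * s = z * z + c" using sq_sq[OF c, of z] by (simp add: s_def power2_eq_square)
  have ds: "DERIV (\<lambda>z. sqrt (z\<^sup>2 + c)) z :> inverse (sqrt (z\<^sup>2 + c)) / 2 * (2 * z)"
    by (rule DERIV_chain2[OF DERIV_real_sqrt]) (auto intro!: derivative_eq_intros simp: pos_sq c)
  have dr: "DERIV (\<lambda>z. (sqrt (z\<^sup>2 + c) - z) / 2) z :> (inverse (sqrt (z\<^sup>2 + c)) / 2 * (2 * z) - 1) / 2"
    by (intro DERIV_cdivide DERIV_diff ds DERIV_ident)
  have dq: "DERIV (\<lambda>z. std_phi z / ((sqrt (z\<^sup>2 + c) - z) / 2)) z :>
      ((- z * std_phi z) * ((sqrt (z\<^sup>2 + c) - z) / 2) - std_phi z * ((inverse (sqrt (z\<^sup>2 + c)) / 2 * (2 * z) - 1) / 2))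
        / (((sqrt (z\<^sup>2 + c) - z) / 2) * ((sqrt (z\<^sup>2 + c) - z) / 2))"
    by (rule DERIV_divide[OF phi_deriv dr]) (use s in \<open>auto simp: s_def\<close>)
  have d: "DERIV (\<lambda>z. std_phi z / ((sqrt (z\<^sup>2 + c) - z) / 2) - std_Phi z) z :>
      ((- z * std_phi z) * ((sqrt (z\<^sup>2 + c) - z) / 2) - std_phi z * ((inverse (sqrt (z\<^sup>2 + c)) / 2 * (2 * z) - 1) / 2))
        / (((sqrt (z\<^sup>2 + c) - z) / 2) * ((sqrt (z\<^sup>2 + c) - z) / 2)) - std_phi z"
    by (rule DERIV_diff[OF dq Phi_deriv])
  have eq: "((- z * std_phi z) * ((s - z) / 2) - std_phi z * ((inverse s / 2 * (2 * z) - 1) / 2))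
        / (((s - z) / 2) * ((s - z) / 2)) - std_phi z
      = std_phi z * ((1 - z / s) / 2 - c / 4) / ((s - z) / 2)\<^sup>2"
  proof -
    have nz: "s - z \<noteq> 0" using s by auto
    have "((- z * std_phi z) * ((s - z) / 2) - std_phi z * ((inverse s / 2 * (2 * z) - 1) / 2))
        - std_phi z * (((s - z) / 2) * ((s - z) / 2))
      = std_phi z * ((1 - z / s) / 2 - c / 4)"
      using s(3) ss by (simp add: field_simps)
    then show ?thesis unfolding power2_eq_square by (intro div_helper) (use nz in auto)
  qed
  show ?thesis using d eq by (simp add: s_def)
qed

lemma aux_div: "(0::real) < a \<Longrightarrow> 1 \<le> (r::real) \<Longrightarrow> 0 \<le> a / r \<and> a / r \<le> a"
  by (simp add: divide_le_eq)

definition Gf :: "real \<Rightarrow> real \<Rightarrow> real" where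
  "Gf c z = std_phi z / ((sqrt (z\<^sup>2 + c) - z) / 2) - std_Phi z"

lemma phi_bot: "(std_phi \<longlongrightarrow> 0) at_bot"
  unfolding phi_eq[abs_def] by real_asymp

lemma G_bot: assumes c: "c > 0" shows "(Gf c \<longlongrightarrow> 0) at_bot"
proof -
  have "((\<lambda>z. std_phi z / ((sqrt (z\<^sup>2 + c) - z) / 2)) \<longlongrightarrow> 0) at_bot"
  proof (rule tendsto_sandwich[OF _ _ tendsto_const phi_bot])
    have A: "\<forall>z\<le>-1. 0 \<le> std_phi z / ((sqrt (z\<^sup>2 + c) - z) / 2) \<and>
                  std_phi z / ((sqrt (z\<^sup>2 + c) - z) / 2) \<le> std_phi z"
    proof (intro allI impI conjI)
      fix z :: real assume z: "z \<le> -1"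
      have s: "sqrt (z\<^sup>2 + c) > - z" "sqrt (z\<^sup>2 + c) > z" using sq_gt[OF c] by auto
      then have "sqrt (z\<^sup>2 + c) - z \<ge> 2" using z by linarith
      then have r: "(sqrt (z\<^sup>2 + c) - z) / 2 \<ge> 1" by (simp add: field_simps)
      show "0 \<le> std_phi z / ((sqrt (z\<^sup>2 + c) - z) / 2)"
        using aux_div[OF phi_pos r] by blast
      show "std_phi z / ((sqrt (z\<^sup>2 + c) - z) / 2) \<le> std_phi z"
        using aux_div[OF phi_pos r] by blast
    qed
    then have ev: "eventually (\<lambda>z. 0 \<le> std_phi z / ((sqrt (z\<^sup>2 + c) - z) / 2) \<and>
                  std_phi z / ((sqrt (z\<^sup>2 + c) - z) / 2) \<le> std_phi z) at_bot"
      unfolding eventually_at_bot_linorder by (rule exI[of _ "-1"])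
    show "eventually (\<lambda>z. 0 \<le> std_phi z / ((sqrt (z\<^sup>2 + c) - z) / 2)) at_bot"
      by (rule eventually_mono[OF ev]) simp
    show "eventually (\<lambda>z. std_phi z / ((sqrt (z\<^sup>2 + c) - z) / 2) \<le> std_phi z) at_bot"
      by (rule eventually_mono[OF ev]) simp
  qed
  then have "((\<lambda>z. std_phi z / ((sqrt (z\<^sup>2 + c) - z) / 2) - std_Phi z) \<longlongrightarrow> 0 - 0) at_bot"
    by (intro tendsto_diff Phi_bot)
  then show ?thesis by (simp add: Gf_def[abs_def])
qed

lemma G_deriv': "c > 0 \<Longrightarrow> DERIV (Gf c) z :>
           std_phi z * ((1 - z / sqrt (z\<^sup>2 + c)) / 2 - c / 4) / ((sqrt (z\<^sup>2 + c) - z) / 2)\<^sup>2"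
  unfolding Gf_def[abs_def] by (rule G_deriv)

lemma G_le_lim:
  assumes "\<And>w. w \<le> z \<Longrightarrow> Gf c w \<le> Gf c z" "c > 0"
  shows "0 \<le> Gf c z"
proof (rule tendsto_le[OF _ tendsto_const G_bot[OF assms(2)]])
  show "eventually (\<lambda>w. Gf c w \<le> Gf c z) at_bot"
    unfolding eventually_at_bot_linorder by (rule exI[of _ z]) (use assms(1) in auto)
qed simp

lemma G_ge_lim:
  assumes "\<And>w. w \<le> z \<Longrightarrow> Gf c z \<le> Gf c w" "c > 0"
  shows "Gf c z \<le> 0"
proof (rule tendsto_le[OF _ G_bot[OF assms(2)] tendsto_const])
  show "eventually (\<lambda>w. Gf c z \<le> Gf c w) at_bot"
    unfolding eventually_at_bot_linorder by (rule exI[of _ z]) (use assms(1) in auto)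
qed simp

lemma G4_le: "Gf 4 z \<le> 0"
proof (rule G_ge_lim)
  fix w assume "w \<le> z"
  show "Gf 4 z \<le> Gf 4 w"
  proof (rule DERIV_nonpos_imp_nonincreasing[OF \<open>w \<le> z\<close>])
    fix x assume "w \<le> x" "x \<le> z"
    have s: "sqrt (x\<^sup>2 + 4) > - x" "sqrt (x\<^sup>2 + 4) > 0" using sq_gt[of 4 x] by auto
    have "- x / sqrt (x\<^sup>2 + 4) \<le> sqrt (x\<^sup>2 + 4) / sqrt (x\<^sup>2 + 4)"
      using s by (intro divide_right_mono) auto
    then have "- x / sqrt (x\<^sup>2 + 4) \<le> 1" using s by simp
    then have "(1 - x / sqrt (x\<^sup>2 + 4)) / 2 - 4 / 4 \<le> 0" by simp
    then have "std_phi x * ((1 - x / sqrt (x\<^sup>2 + 4)) / 2 - 4 / 4) / ((sqrt (x\<^sup>2 + 4) - x) / 2)\<^sup>2 \<le> 0"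
      using phi_pos[of x] by (intro divide_nonpos_nonneg mult_nonneg_nonpos) auto
    then show "\<exists>y. DERIV (Gf 4) x :> y \<and> y \<le> 0" using G_deriv'[of 4 x] by auto
  qed
qed simp

lemma lam_upper: "std_phi z / std_Phi z \<le> (sqrt (z\<^sup>2 + 4) - z) / 2"
proof -
  have r: "(sqrt (z\<^sup>2 + 4) - z) / 2 > 0" using sq_gt[of 4 z] by auto
  have "std_phi z / ((sqrt (z\<^sup>2 + 4) - z) / 2) \<le> std_Phi z" using G4_le[of z] by (simp add: Gf_def)
  then show ?thesis using r Phi_pos[of z] by (simp add: divide_le_eq mult.commute)
qed

lemma hsign:
  fixes w c k :: real
  assumes w: "w \<le> 0" and c: "c > 0" and k: "k = c / 2 - 1" "k > 0"
  shows "w\<^sup>2 \<ge> k\<^sup>2 * (w\<^sup>2 + c) \<Longrightarrow> (1 - w / sqrt (w\<^sup>2 + c)) / 2 - c / 4 \<ge> 0"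
    and "\<not> w\<^sup>2 \<ge> k\<^sup>2 * (w\<^sup>2 + c) \<Longrightarrow> (1 - w / sqrt (w\<^sup>2 + c)) / 2 - c / 4 \<le> 0"
proof -
  define s where "s = sqrt (w\<^sup>2 + c)"
  have s0: "s > 0" using sq_gt[OF c, of w] by (simp add: s_def)
  have ss: "s\<^sup>2 = w\<^sup>2 + c" using sq_sq[OF c, of w] by (simp add: s_def)
  have h: "(1 - w / s) / 2 - c / 4 = (- w / s - k) / 2" using k by (simp add: field_simps)
  have ks: "k * s \<ge> 0" using k s0 by simp
  {
    assume "w\<^sup>2 \<ge> k\<^sup>2 * (w\<^sup>2 + c)"
    then have "(k * s)\<^sup>2 \<le> (- w)\<^sup>2" using ss by (simp add: power_mult_distrib)
    then have "k * s \<le> - w" by (rule power2_le_imp_le) (use w in auto)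
    then have "k \<le> (- w) / s" using pos_le_divide_eq[OF s0, of k "- w"] by blast
    then have "(1 - w / s) / 2 - c / 4 \<ge> 0" unfolding h by (simp add: field_simps)
    then show "(1 - w / sqrt (w\<^sup>2 + c)) / 2 - c / 4 \<ge> 0" unfolding s_def .
  }
  {
    assume "\<not> w\<^sup>2 \<ge> k\<^sup>2 * (w\<^sup>2 + c)"
    then have "(- w)\<^sup>2 < (k * s)\<^sup>2" using ss by (simp add: power_mult_distrib)
    then have "- w < k * s" using ks by (rule power2_less_imp_less)
    then have "(- w) / s < k" using pos_divide_less_eq[OF s0, of "- w" k] by blast
    then have "(1 - w / s) / 2 - c / 4 \<le> 0" unfolding h by (simp add: field_simps)
    then show "(1 - w / sqrt (w\<^sup>2 + c)) / 2 - c / 4 \<le> 0" unfolding s_def .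
  }
qed

lemma G8_0: "Gf (8 / pi) 0 = 0"
proof -
  have "sqrt (2 * pi) * sqrt (8 / pi) = 4"
    by (simp add: real_sqrt_mult[symmetric])
  then show ?thesis
    by (simp add: Gf_def Phi_0 phi_0 field_simps)
qed

lemma G8_ge: assumes z: "z \<le> 0" shows "Gf (8 / pi) z \<ge> 0"
proof -
  define c where "c = 8 / pi"
  define k where "k = c / 2 - 1"
  have c: "c > 0" by (simp add: c_def)
  have k: "k > 0" using pi_less_4 by (simp add: k_def c_def field_simps)
  have dsign: "\<exists>y. DERIV (Gf c) x :> y \<and> y \<ge> 0" if "x \<le> 0" "x\<^sup>2 \<ge> k\<^sup>2 * (x\<^sup>2 + c)" for x
  proof -
    have "(1 - x / sqrt (x\<^sup>2 + c)) / 2 - c / 4 \<ge> 0" using hsign(1)[OF that(1) c k_def k that(2)] .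
    then have "std_phi x * ((1 - x / sqrt (x\<^sup>2 + c)) / 2 - c / 4) / ((sqrt (x\<^sup>2 + c) - x) / 2)\<^sup>2 \<ge> 0"
      using phi_pos[of x] by simp
    then show ?thesis using G_deriv'[OF c, of x] by auto
  qed
  have dsign2: "\<exists>y. DERIV (Gf c) x :> y \<and> y \<le> 0" if "x \<le> 0" "\<not> x\<^sup>2 \<ge> k\<^sup>2 * (x\<^sup>2 + c)" for x
  proof -
    have "(1 - x / sqrt (x\<^sup>2 + c)) / 2 - c / 4 \<le> 0" using hsign(2)[OF that(1) c k_def k that(2)] .
    then have "std_phi x * ((1 - x / sqrt (x\<^sup>2 + c)) / 2 - c / 4) / ((sqrt (x\<^sup>2 + c) - x) / 2)\<^sup>2 \<le> 0"
      using phi_pos[of x] by (intro divide_nonpos_nonneg mult_nonneg_nonpos) auto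
    then show ?thesis using G_deriv'[OF c, of x] by auto
  qed
  have k1: "k < 1" using pi_gt3 by (simp add: k_def c_def field_simps)
  have k2: "k\<^sup>2 \<le> 1" using k k1 by (simp add: power_le_one)
  have mono: "k\<^sup>2 * (b + c) \<le> b" if "a \<le> b" "k\<^sup>2 * (a + c) \<le> a" for a b
  proof -
    have "(1 - k\<^sup>2) * a \<le> (1 - k\<^sup>2) * b" using that(1) k2 by (intro mult_left_mono) auto
    then show ?thesis using that(2) by (simp add: algebra_simps)
  qed
  have mono2: "\<not> k\<^sup>2 * (b + c) \<le> b" if "b \<le> a" "\<not> k\<^sup>2 * (a + c) \<le> a" for a b
    using mono[OF that(1)] that(2) by blast
  show ?thesis
  proof (cases "z\<^sup>2 \<ge> k\<^sup>2 * (z\<^sup>2 + c)")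
    case True
    have "0 \<le> Gf c z"
    proof (rule G_le_lim[OF _ c])
      fix w assume wz: "w \<le> z"
      show "Gf c w \<le> Gf c z"
      proof (rule DERIV_nonneg_imp_nondecreasing[OF wz])
        fix x assume x: "w \<le> x" "x \<le> z"
        have "(- z)\<^sup>2 \<le> (- x)\<^sup>2" using x z by (rule_tac power_mono) auto
        then have "z\<^sup>2 \<le> x\<^sup>2" by simp
        then have "x\<^sup>2 \<ge> k\<^sup>2 * (x\<^sup>2 + c)" using True by (rule mono)
        then show "\<exists>y. DERIV (Gf c) x :> y \<and> y \<ge> 0" using dsign x z by auto
      qed
    qed
    then show ?thesis by (simp add: c_def)
  next
    case False
    have "Gf c 0 \<le> Gf c z"
    proof (rule DERIV_nonpos_imp_nonincreasing[OF z])
      fix x assume x: "z \<le> x" "x \<le> 0"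
      have "(- x)\<^sup>2 \<le> (- z)\<^sup>2" using x z by (rule_tac power_mono) auto
      then have "x\<^sup>2 \<le> z\<^sup>2" by simp
      then have "\<not> x\<^sup>2 \<ge> k\<^sup>2 * (x\<^sup>2 + c)" using False by (rule mono2)
      then show "\<exists>y. DERIV (Gf c) x :> y \<and> y \<le> 0" using dsign2 x by auto
    qed
    then show ?thesis using G8_0 by (simp add: c_def)
  qed
qed



lemma lam_lower: assumes z: "z \<le> 0"
  shows "(sqrt (z\<^sup>2 + 8 / pi) - z) / 2 \<le> std_phi z / std_Phi z"
proof -
  have r: "(sqrt (z\<^sup>2 + 8 / pi) - z) / 2 > 0" using sq_gt[of "8 / pi" z] by auto
  have "std_Phi z \<le> std_phi z / ((sqrt (z\<^sup>2 + 8 / pi) - z) / 2)" using G8_ge[OF z] by (simp add: Gf_def)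
  then have "std_Phi z * ((sqrt (z\<^sup>2 + 8 / pi) - z) / 2) \<le> std_phi z"
    using r by (simp add: le_divide_eq)
  then show ?thesis using Phi_pos[of z] by (simp add: le_divide_eq mult.commute)
qed

lemma psi_le1: "psi z \<le> 1"
proof -
  define l where "l = std_phi z / std_Phi z"
  define s where "s = sqrt (z\<^sup>2 + 4)"
  have l0: "l > 0" using phi_pos[of z] Phi_pos[of z] by (simp add: l_def)
  have lr: "l \<le> (s - z) / 2" using lam_upper[of z] by (simp add: l_def s_def)
  have s: "s > z" "s > - z" using sq_gt[of 4 z] by (auto simp: s_def)
  have ss: "s\<^sup>2 = z\<^sup>2 + 4" using sq_sq[of 4 z] by (simp add: s_def)
  have "psi z - 1 = (l - (s - z) / 2) * (l + (s + z) / 2)"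
    using ss by (simp add: psi_def l_def[symmetric] field_simps power2_eq_square)
  also have "\<dots> \<le> 0" using lr s l0 by (intro mult_nonpos_nonneg) auto
  finally show ?thesis by simp
qed

lemma psi_ge: assumes z: "z \<le> 0" shows "2 / pi \<le> psi z"
proof -
  define l where "l = std_phi z / std_Phi z"
  define s where "s = sqrt (z\<^sup>2 + 8 / pi)"
  have lr: "(s - z) / 2 \<le> l" using lam_lower[OF z] by (simp add: l_def s_def)
  have s: "s > z" "s > - z" using sq_gt[of "8 / pi" z] by (auto simp: s_def)
  have ss: "s\<^sup>2 = z\<^sup>2 + 8 / pi" using sq_sq[of "8 / pi" z] by (simp add: s_def)
  have "2 / pi = ((s - z) / 2) * (z + (s - z) / 2)"
    using ss by (simp add: field_simps power2_eq_square)
  also have "\<dots> \<le> l * (z + l)" using lr s by (intro mult_mono) (auto simp: field_simps)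
  also have "\<dots> = psi z" by (simp add: psi_def l_def)
  finally show ?thesis .
qed

lemma psi_nonneg: "0 \<le> psi z"
proof (cases "z \<le> 0")
  case True
  have "0 < 2 / pi" by simp
  then show ?thesis using psi_ge[OF True] by linarith
next
  case False
  have "0 < std_phi z / std_Phi z" using phi_pos[of z] Phi_pos[of z] by simp
  then show ?thesis using False unfolding psi_def by (intro mult_nonneg_nonneg) auto
qed

lemma zphi_top: "((\<lambda>z. z * std_phi z) \<longlongrightarrow> 0) at_top"
  unfolding phi_eq by real_asymp

lemma phi_top: "(std_phi \<longlongrightarrow> 0) at_top"
  unfolding phi_eq[abs_def] by real_asymp

lemma psi_top: "(psi \<longlongrightarrow> 0) at_top"
proof -
  have l: "((\<lambda>z. std_phi z / std_Phi z) \<longlongrightarrow> 0 / 1) at_top"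
    by (intro tendsto_divide phi_top Phi_top) simp
  have zl: "((\<lambda>z. (z * std_phi z) / std_Phi z) \<longlongrightarrow> 0 / 1) at_top"
    by (intro tendsto_divide zphi_top Phi_top) simp
  have "((\<lambda>z. (z * std_phi z) / std_Phi z + (std_phi z / std_Phi z) * (std_phi z / std_Phi z)) \<longlongrightarrow> 0 / 1 + (0 / 1) * (0 / 1)) at_top"
    by (intro tendsto_add tendsto_mult l zl)
  moreover have "(\<lambda>z. (z * std_phi z) / std_Phi z + (std_phi z / std_Phi z) * (std_phi z / std_Phi z)) = psi"
    by (rule ext) (simp add: psi_def algebra_simps)
  ultimately show ?thesis by simp
qed



definition symf :: "real^'n^'n \<Rightarrow> bool" where
  "symf A \<longleftrightarrow> (\<forall>u v. u \<bullet> (A *v v) = v \<bullet> (A *v u))"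

lemma scalar_zero:
  fixes P K :: real
  assumes h: "\<And>t. 0 \<le> 2 * t * P + t\<^sup>2 * K" and K: "K \<ge> 0" and P: "P \<ge> 0"
  shows "P = 0"
proof (rule ccontr)
  assume "P \<noteq> 0"
  then have P0: "P > 0" using P by simp
  define d where "d = K + 1"
  have d: "d > 0" using K by (simp add: d_def)
  have "0 \<le> 2 * (- P / d) * P + (- P / d)\<^sup>2 * K" by (rule h)
  also have "\<dots> = (P\<^sup>2 * (K - 2 * d)) / d\<^sup>2" using d by (simp add: field_simps power2_eq_square)
  finally have "0 \<le> (P\<^sup>2 * (K - 2 * d)) / d\<^sup>2" .
  moreover have "(P\<^sup>2 * (K - 2 * d)) / d\<^sup>2 < 0" using P0 d K
    by (intro divide_neg_pos mult_pos_neg) (auto simp: d_def)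
  ultimately show False by simp
qed

lemma quad_scale: "(c *\<^sub>R w) \<bullet> (A *v (c *\<^sub>R w)) = c\<^sup>2 * (w \<bullet> (A *v w))"
  for A :: "real^'n^'n"
  by (simp add: matrix_vector_mult_scaleR power2_eq_square)

lemma quad_lower:
  fixes A :: "real^'n^'n"
  assumes min: "\<And>w. w \<in> sphere 0 1 \<Longrightarrow> \<mu> \<le> w \<bullet> (A *v w)"
  shows "\<mu> * (norm w)\<^sup>2 \<le> w \<bullet> (A *v w)"
proof (cases "w = 0")
  case True then show ?thesis by simp
next
  case False
  define u where "u = (1 / norm w) *\<^sub>R w"
  have "u \<in> sphere 0 1" using False by (simp add: u_def)
  then have "\<mu> \<le> u \<bullet> (A *v u)" by (rule min)
  also have "\<dots> = (1 / norm w)\<^sup>2 * (w \<bullet> (A *v w))" unfolding u_def by (rule quad_scale)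
  finally have "\<mu> * (norm w)\<^sup>2 \<le> (1 / norm w)\<^sup>2 * (w \<bullet> (A *v w)) * (norm w)\<^sup>2"
    by (simp add: mult_right_mono)
  also have "\<dots> = w \<bullet> (A *v w)" using False by (simp add: field_simps)
  finally show ?thesis .
qed

lemma min_eigen:
  fixes A :: "real^'n^'n"
  assumes S: "symf A" and v: "v \<in> sphere 0 1"
    and min: "\<And>w. w \<in> sphere 0 1 \<Longrightarrow> v \<bullet> (A *v v) \<le> w \<bullet> (A *v w)"
  shows "A *v v = (v \<bullet> (A *v v)) *\<^sub>R v"
proof -
  define \<mu> where "\<mu> = v \<bullet> (A *v v)"
  define p where "p = A *v v - \<mu> *\<^sub>R v"
  have low: "\<mu> * (norm w)\<^sup>2 \<le> w \<bullet> (A *v w)" for w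
    by (rule quad_lower) (use min in \<open>auto simp: \<mu>_def\<close>)
  have nv: "v \<bullet> v = 1" using v by (simp add: dot_square_norm)
  have sym: "v \<bullet> (A *v p) = p \<bullet> (A *v v)" using S by (simp add: symf_def)
  have pAv: "p \<bullet> (A *v v) - \<mu> * (v \<bullet> p) = p \<bullet> p"
    by (simp add: p_def inner_diff_left inner_diff_right inner_commute algebra_simps)
  define K where "K = p \<bullet> (A *v p) - \<mu> * (p \<bullet> p)"
  have K: "K \<ge> 0" using low[of p] by (simp add: K_def dot_square_norm)
  have "0 \<le> 2 * t * (p \<bullet> p) + t\<^sup>2 * K" for t
  proof -
    have "\<mu> * (norm (v + t *\<^sub>R p))\<^sup>2 \<le> (v + t *\<^sub>R p) \<bullet> (A *v (v + t *\<^sub>R p))" by (rule low)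
    moreover have "(norm (v + t *\<^sub>R p))\<^sup>2 = 1 + 2 * t * (v \<bullet> p) + t\<^sup>2 * (p \<bullet> p)"
      unfolding power2_norm_eq_inner by (simp add: inner_add_left inner_add_right nv inner_commute power2_eq_square algebra_simps)
    moreover have "(v + t *\<^sub>R p) \<bullet> (A *v (v + t *\<^sub>R p)) = \<mu> + 2 * t * (p \<bullet> (A *v v)) + t\<^sup>2 * (p \<bullet> (A *v p))"
      using sym by (simp add: matrix_vector_right_distrib matrix_vector_mult_scaleR inner_add_left inner_add_right
          \<mu>_def power2_eq_square algebra_simps inner_commute)
    ultimately have "0 \<le> 2 * t * (p \<bullet> (A *v v) - \<mu> * (v \<bullet> p)) + t\<^sup>2 * (p \<bullet> (A *v p) - \<mu> * (p \<bullet> p))"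
      by (simp add: algebra_simps)
    then show ?thesis using pAv by (simp add: K_def)
  qed
  then have "p \<bullet> p = 0" using K by (intro scalar_zero[of "p \<bullet> p" K]) auto
  then have "p = 0" by simp
  then show ?thesis by (simp add: p_def \<mu>_def)
qed

lemma eigen_finite:
  fixes A :: "real^'n^'n"
  assumes S: "symf A"
  shows "finite (eigenvalues A)"
proof -
  define e where "e c = (SOME v. v \<noteq> 0 \<and> A *v v = c *\<^sub>R v)" for c
  have e: "e c \<noteq> 0 \<and> A *v e c = c *\<^sub>R e c" if "c \<in> eigenvalues A" for c
  proof -
    have "\<exists>v. v \<noteq> 0 \<and> A *v v = c *\<^sub>R v" using that unfolding eigenvalues_def by simp
    from someI_ex[OF this] show ?thesis unfolding e_def .
  qed
  have orth: "e c \<bullet> e d = 0" if "c \<in> eigenvalues A" "d \<in> eigenvalues A" "c \<noteq> d" for c d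
  proof -
    have ec: "A *v e c = c *\<^sub>R e c" using e[OF that(1)] by blast
    have ed: "A *v e d = d *\<^sub>R e d" using e[OF that(2)] by blast
    have "c * (e d \<bullet> e c) = e d \<bullet> (A *v e c)" unfolding ec by (simp only: inner_scaleR_right)
    also have "\<dots> = e c \<bullet> (A *v e d)" using S[unfolded symf_def, rule_format, of "e d" "e c"] .
    also have "\<dots> = d * (e c \<bullet> e d)" unfolding ed by (simp only: inner_scaleR_right)
    finally have "c * (e c \<bullet> e d) = d * (e c \<bullet> e d)" by (metis inner_commute)
    then have "(c - d) * (e c \<bullet> e d) = 0" by (simp only: left_diff_distrib)
    then show ?thesis using that(3) by simp
  qed
  have inj: "inj_on e (eigenvalues A)"
  proof (rule inj_onI)
    fix c d assume cd: "c \<in> eigenvalues A" "d \<in> eigenvalues A" "e c = e d"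
    have "c *\<^sub>R e c = A *v e c" using e[OF cd(1)] by simp
    also have "\<dots> = A *v e d" using cd(3) by simp
    also have "\<dots> = d *\<^sub>R e d" using e[OF cd(2)] by simp
    also have "\<dots> = d *\<^sub>R e c" using cd(3) by simp
    finally have "c *\<^sub>R e c = d *\<^sub>R e c" .
    then show "c = d" using e[OF cd(1)] by (simp add: scaleR_cancel_right)
  qed
  have "pairwise orthogonal (e ` eigenvalues A)"
  proof (rule pairwiseI)
    fix a b assume ab: "a \<in> e ` eigenvalues A" "b \<in> e ` eigenvalues A" "a \<noteq> b"
    then obtain c d where cd: "c \<in> eigenvalues A" "d \<in> eigenvalues A" "a = e c" "b = e d" by blast
    then have "c \<noteq> d" using ab(3) by blast
    then show "orthogonal a b" unfolding orthogonal_def cd(3,4) using orth cd(1,2) by blast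
  qed
  moreover have "0 \<notin> e ` eigenvalues A"
  proof
    assume "0 \<in> e ` eigenvalues A"
    then obtain c where "c \<in> eigenvalues A" "0 = e c" by blast
    then show False using e by metis
  qed
  ultimately have "independent (e ` eigenvalues A)" by (rule pairwise_orthogonal_independent)
  then have "finite (e ` eigenvalues A)" by (rule finiteI_independent)
  then show ?thesis using inj by (rule finite_imageD)
qed

lemma eigen_between:
  fixes A :: "real^'n^'n"
  assumes "c \<in> eigenvalues A"
  shows "\<exists>w\<in>sphere 0 1. c = w \<bullet> (A *v w)"
proof -
  obtain v where v: "v \<noteq> 0" "A *v v = c *\<^sub>R v" using assms by (auto simp: eigenvalues_def)
  define w where "w = (1 / norm v) *\<^sub>R v"
  have "w \<in> sphere 0 1" using v by (simp add: w_def)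
  moreover have "w \<bullet> (A *v w) = c"
    using v by (simp add: w_def matrix_vector_mult_scaleR dot_square_norm power2_eq_square field_simps)
  ultimately show ?thesis by auto
qed

lemma quad_cont: "continuous_on S (\<lambda>w. w \<bullet> (A *v w))" for A :: "real^'n^'n"
  by (intro continuous_intros)

lemma lambda_min_char:
  fixes A :: "real^'n^'n"
  assumes S: "symf A"
  shows "(\<forall>w\<in>sphere 0 1. lambda_min A \<le> w \<bullet> (A *v w)) \<and> (\<exists>v\<in>sphere 0 1. lambda_min A = v \<bullet> (A *v v))"
proof -
  obtain v where v: "v \<in> sphere (0::real^'n) 1" and vmin: "\<forall>w\<in>sphere 0 1. v \<bullet> (A *v v) \<le> w \<bullet> (A *v w)"
    using continuous_attains_inf[OF compact_sphere _ quad_cont, of 0 1 A] by auto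
  have ev: "v \<bullet> (A *v v) \<in> eigenvalues A"
    unfolding eigenvalues_def using min_eigen[OF S v] vmin v by (intro CollectI exI[of _ v]) auto
  have fin: "finite (eigenvalues A)" by (rule eigen_finite[OF S])
  have "lambda_min A = v \<bullet> (A *v v)"
    unfolding lambda_min_def
  proof (rule Min_eqI[OF fin _ ev])
    fix c assume "c \<in> eigenvalues A"
    then obtain w where "w \<in> sphere 0 1" "c = w \<bullet> (A *v w)" using eigen_between by blast
    then show "v \<bullet> (A *v v) \<le> c" using vmin by auto
  qed
  then show ?thesis using v vmin by auto
qed

lemma neg_mv: "(- A) *v v = - (A *v v)" for A :: "real^'n^'n"
  by (simp add: matrix_vector_mult_def vec_eq_iff sum_negf)

lemma symf_uminus: "symf A \<Longrightarrow> symf (- A)"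
  by (simp add: symf_def neg_mv)

lemma lambda_max_char:
  fixes A :: "real^'n^'n"
  assumes S: "symf A"
  shows "(\<forall>w\<in>sphere 0 1. w \<bullet> (A *v w) \<le> lambda_max A) \<and> (\<exists>v\<in>sphere 0 1. lambda_max A = v \<bullet> (A *v v))"
proof -
  obtain v where v: "v \<in> sphere (0::real^'n) 1" and vmax: "\<forall>w\<in>sphere 0 1. w \<bullet> (A *v w) \<le> v \<bullet> (A *v v)"
    using continuous_attains_sup[OF compact_sphere _ quad_cont, of 0 1 A] by auto
  have "(- A) *v v = (v \<bullet> ((- A) *v v)) *\<^sub>R v"
    by (rule min_eigen[OF symf_uminus[OF S] v]) (use vmax in \<open>auto simp: neg_mv\<close>)
  then have "A *v v = (v \<bullet> (A *v v)) *\<^sub>R v" by (simp add: neg_mv)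
  then have ev: "v \<bullet> (A *v v) \<in> eigenvalues A"
    unfolding eigenvalues_def using v by (intro CollectI exI[of _ v]) auto
  have fin: "finite (eigenvalues A)" by (rule eigen_finite[OF S])
  have "lambda_max A = v \<bullet> (A *v v)"
    unfolding lambda_max_def
  proof (rule Max_eqI[OF fin _ ev])
    fix c assume "c \<in> eigenvalues A"
    then obtain w where "w \<in> sphere 0 1" "c = w \<bullet> (A *v w)" using eigen_between by blast
    then show "c \<le> v \<bullet> (A *v v)" using vmax by auto
  qed
  then show ?thesis using v vmax by auto
qed



lemma wmat_mv: "(\<Sum>i<N. w i *\<^sub>R outer (x i)) *v v = (\<Sum>i<N. (w i * (x i \<bullet> v)) *\<^sub>R x i)"
  for x :: "nat \<Rightarrow> real^'n"
  by (simp add: vec_eq_iff matrix_vector_mult_def outer_def inner_vec_def sum_component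
      sum_distrib_left sum_distrib_right mult_ac sum.swap[of _ UNIV])

lemma wmat_quad: "u \<bullet> ((\<Sum>i<N. w i *\<^sub>R outer (x i)) *v v) = (\<Sum>i<N. w i * (x i \<bullet> v) * (x i \<bullet> u))"
  for x :: "nat \<Rightarrow> real^'n"
  unfolding wmat_mv by (simp add: inner_sum_right inner_commute)

lemma wmat_sym: "symf (\<Sum>i<N. w i *\<^sub>R outer (x i))"
  for x :: "nat \<Rightarrow> real^'n"
  unfolding symf_def wmat_quad by (simp add: mult_ac)

lemma wmat_Q: "v \<bullet> ((\<Sum>i<N. w i *\<^sub>R outer (x i)) *v v) = (\<Sum>i<N. w i * (x i \<bullet> v)\<^sup>2)"
  for x :: "nat \<Rightarrow> real^'n"
  unfolding wmat_quad by (simp add: power2_eq_square mult_ac)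

lemma hess_Q: "v \<bullet> (hess N y x \<theta> *v v) = (\<Sum>i<N. psi (y i * (x i \<bullet> \<theta>)) * (x i \<bullet> v)\<^sup>2)"
  unfolding hess_def by (rule wmat_Q)

lemma hess_sym: "symf (hess N y x \<theta>)"
  unfolding hess_def by (rule wmat_sym)

lemma S_eq: "(\<Sum>i<N. outer (x i)) = (\<Sum>i<N. 1 *\<^sub>R outer (x i))"
  by simp

lemma S_Q: "v \<bullet> ((\<Sum>i<N. outer (x i)) *v v) = (\<Sum>i<N. (x i \<bullet> v)\<^sup>2)"
  for x :: "nat \<Rightarrow> real^'n"
  unfolding S_eq wmat_Q by simp

lemma S_sym: "symf (\<Sum>i<N. outer (x i))"
  for x :: "nat \<Rightarrow> real^'n"
  unfolding S_eq by (rule wmat_sym)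

lemma sphere_ne: "sphere (0::real^'n) 1 \<noteq> {}"
  by simp

lemma lmin_nonneg: "0 \<le> lambda_min (hess N y x \<theta>)"
proof -
  obtain v where "v \<in> sphere 0 1" "lambda_min (hess N y x \<theta>) = v \<bullet> (hess N y x \<theta> *v v)"
    using lambda_min_char[OF hess_sym] by blast
  then show ?thesis unfolding hess_Q by (simp add: sum_nonneg psi_nonneg)
qed

lemma m_nonneg: "0 \<le> m_const N y x"
  unfolding m_const_def by (rule cINF_greatest) (auto intro: lmin_nonneg)

lemma m_le: "m_const N y x \<le> lambda_min (hess N y x \<theta>)"
  unfolding m_const_def by (rule cINF_lower) (auto intro!: bdd_belowI[of _ 0] lmin_nonneg)

lemma lmax_le: "lambda_max (hess N y x \<theta>) \<le> lambda_max (\<Sum>i<N. outer (x i))"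
proof -
  obtain v where v: "v \<in> sphere 0 1" "lambda_max (hess N y x \<theta>) = v \<bullet> (hess N y x \<theta> *v v)"
    using lambda_max_char[OF hess_sym] by blast
  have "v \<bullet> (hess N y x \<theta> *v v) \<le> v \<bullet> ((\<Sum>i<N. outer (x i)) *v v)"
    unfolding hess_Q S_Q
    by (intro sum_mono) (auto intro: mult_left_le_one_le psi_le1 psi_nonneg)
  also have "\<dots> \<le> lambda_max (\<Sum>i<N. outer (x i))"
    using lambda_max_char[OF S_sym] v(1) by blast
  finally show ?thesis using v by simp
qed

lemma L_le: "L_const N y x \<le> lambda_max (\<Sum>i<N. outer (x i))"
  unfolding L_const_def by (rule cSUP_least) (auto intro: lmax_le)

lemma lmaxS_nonneg: "0 \<le> lambda_max (\<Sum>i<N. outer (x i))" for x :: "nat \<Rightarrow> real^'n"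
proof -
  obtain v :: "real^'n" where v: "v \<in> sphere 0 1" using sphere_ne by blast
  have "0 \<le> v \<bullet> ((\<Sum>i<N. outer (x i)) *v v)" using S_Q[where v=v and N=N and x=x] by (simp add: sum_nonneg)
  also have "\<dots> \<le> lambda_max (\<Sum>i<N. outer (x i))"
    using lambda_max_char[OF S_sym] v by blast
  finally show ?thesis .
qed



definition Jt :: "nat \<Rightarrow> (nat \<Rightarrow> real) \<Rightarrow> (nat \<Rightarrow> real^'n) \<Rightarrow> real^'n \<Rightarrow> nat set" where
  "Jt N y x \<theta> = {i. i < N \<and> y i * (x i \<bullet> \<theta>) \<le> 0}"

lemma lmin_lower:
  fixes x :: "nat \<Rightarrow> real^'n"
  shows "\<exists>v\<in>sphere 0 1. (2 / pi) * (\<Sum>i\<in>Jt N y x \<theta>. (x i \<bullet> v)\<^sup>2) \<le> lambda_min (hess N y x \<theta>)"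
proof -
  obtain v where v: "v \<in> sphere 0 1" "lambda_min (hess N y x \<theta>) = v \<bullet> (hess N y x \<theta> *v v)"
    using lambda_min_char[OF hess_sym] by blast
  have "(2 / pi) * (\<Sum>i\<in>Jt N y x \<theta>. (x i \<bullet> v)\<^sup>2) = (\<Sum>i\<in>Jt N y x \<theta>. (2 / pi) * (x i \<bullet> v)\<^sup>2)"
    by (simp add: sum_distrib_left)
  also have "\<dots> \<le> (\<Sum>i\<in>Jt N y x \<theta>. psi (y i * (x i \<bullet> \<theta>)) * (x i \<bullet> v)\<^sup>2)"
    by (intro sum_mono mult_right_mono psi_ge) (auto simp: Jt_def)
  also have "\<dots> \<le> (\<Sum>i<N. psi (y i * (x i \<bullet> \<theta>)) * (x i \<bullet> v)\<^sup>2)"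
    by (intro sum_mono2) (auto simp: Jt_def psi_nonneg)
  also have "\<dots> = lambda_min (hess N y x \<theta>)" using v(2) by (simp add: hess_Q)
  finally show ?thesis using v(1) by blast
qed

lemma J_contains:
  fixes x :: "nat \<Rightarrow> real^'n"
  shows "\<exists>u\<in>sphere 0 1. I_u N y x u \<subseteq> Jt N y x \<theta>"
proof (cases "\<theta> = 0")
  case True
  obtain u :: "real^'n" where "u \<in> sphere 0 1" using sphere_ne by blast
  then show ?thesis using True by (intro bexI[of _ u]) (auto simp: I_u_def Jt_def)
next
  case False
  define u where "u = (1 / norm \<theta>) *\<^sub>R \<theta>"
  have u: "u \<in> sphere 0 1" using False by (simp add: u_def)
  have "I_u N y x u \<subseteq> Jt N y x \<theta>"
  proof
    fix i assume "i \<in> I_u N y x u"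
    then have i: "i < N" "y i * (x i \<bullet> u) \<le> 0" by (auto simp: I_u_def)
    have "y i * (x i \<bullet> u) = (y i * (x i \<bullet> \<theta>)) / norm \<theta>" by (simp add: u_def)
    then have "y i * (x i \<bullet> \<theta>) \<le> 0" using i(2) False by (simp add: divide_le_0_iff)
    then show "i \<in> Jt N y x \<theta>" using i(1) by (simp add: Jt_def)
  qed
  then show ?thesis using u by blast
qed

lemma m_zero:
  fixes x :: "nat \<Rightarrow> real^'n"
  assumes u: "u \<in> sphere 0 1" and sp: "span (x ` I_u N y x u) \<noteq> UNIV"
  shows "m_const N y x = 0"
proof -
  obtain a where a: "a \<noteq> 0" "\<forall>z\<in>span (x ` I_u N y x u). a \<bullet> z = 0"
    using span_not_UNIV_orthogonal[OF sp] by blast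
  define v where "v = (1 / norm a) *\<^sub>R a"
  have v: "v \<in> sphere 0 1" using a by (simp add: v_def)
  have vx: "x i \<bullet> v = 0" if "i \<in> I_u N y x u" for i
  proof -
    have "x i \<in> span (x ` I_u N y x u)" using that by (intro span_superset[THEN subsetD]) auto
    then have "a \<bullet> x i = 0" using a by blast
    then show ?thesis by (simp add: v_def inner_commute)
  qed
  define f where "f t = (\<Sum>i<N. psi (y i * (x i \<bullet> (t *\<^sub>R u))) * (x i \<bullet> v)\<^sup>2)" for t
  have le: "m_const N y x \<le> f t" for t
  proof -
    have "m_const N y x \<le> lambda_min (hess N y x (t *\<^sub>R u))" by (rule m_le)
    also have "\<dots> \<le> v \<bullet> (hess N y x (t *\<^sub>R u) *v v)" using lambda_min_char[OF hess_sym] v by blast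
    also have "\<dots> = f t" by (simp add: hess_Q f_def)
    finally show ?thesis .
  qed
  have lim: "(f \<longlongrightarrow> 0) at_top"
    unfolding f_def[abs_def]
  proof (rule tendsto_null_sum)
    fix i assume "i \<in> {..<N}"
    show "((\<lambda>t. psi (y i * (x i \<bullet> (t *\<^sub>R u))) * (x i \<bullet> v)\<^sup>2) \<longlongrightarrow> 0) at_top"
    proof (cases "i \<in> I_u N y x u")
      case True
      then show ?thesis using vx by simp
    next
      case False
      then have c: "y i * (x i \<bullet> u) > 0" using \<open>i \<in> {..<N}\<close> by (auto simp: I_u_def)
      have "LIM t at_top. (y i * (x i \<bullet> u)) * t :> at_top"
        by (rule filterlim_tendsto_pos_mult_at_top[OF tendsto_const c filterlim_ident])
      then have "((\<lambda>t. psi ((y i * (x i \<bullet> u)) * t)) \<longlongrightarrow> 0) at_top"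
        by (rule filterlim_compose[OF psi_top])
      then have "((\<lambda>t. psi ((y i * (x i \<bullet> u)) * t) * (x i \<bullet> v)\<^sup>2) \<longlongrightarrow> 0 * (x i \<bullet> v)\<^sup>2) at_top"
        by (intro tendsto_mult tendsto_const)
      then show ?thesis by (simp add: mult_ac)
    qed
  qed
  have "m_const N y x \<le> 0"
    by (rule tendsto_le[OF _ lim tendsto_const]) (auto simp: le)
  then show ?thesis using m_nonneg[of N y x] by simp
qed

lemma q_pos:
  fixes x :: "nat \<Rightarrow> real^'n"
  assumes J: "finite J" and sp: "span (x ` J) = UNIV" and v: "v \<in> sphere 0 1"
  shows "(\<Sum>i\<in>J. (x i \<bullet> v)\<^sup>2) > 0"
proof (rule ccontr)
  assume "\<not> ?thesis"
  then have "(\<Sum>i\<in>J. (x i \<bullet> v)\<^sup>2) = 0" using sum_nonneg[of J "\<lambda>i. (x i \<bullet> v)\<^sup>2"] by simp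
  then have z: "\<forall>i\<in>J. x i \<bullet> v = 0" using sum_nonneg_eq_0_iff[OF J, of "\<lambda>i. (x i \<bullet> v)\<^sup>2"] by simp
  have "orthogonal v v"
  proof (rule orthogonal_to_span)
    show "v \<in> span (x ` J)" using sp by simp
    fix z assume "z \<in> x ` J"
    then show "orthogonal v z" using z by (auto simp: orthogonal_def inner_commute)
  qed
  then have "v = 0" by (simp add: orthogonal_def)
  then show False using v by simp
qed

lemma q_min:
  fixes x :: "nat \<Rightarrow> real^'n"
  assumes J: "finite J" and sp: "span (x ` J) = UNIV"
  shows "\<exists>c>0. \<forall>w\<in>sphere 0 1. c \<le> (\<Sum>i\<in>J. (x i \<bullet> w)\<^sup>2)"
proof -
  have cont: "continuous_on (sphere 0 1) (\<lambda>w. \<Sum>i\<in>J. (x i \<bullet> w)\<^sup>2)"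
    by (intro continuous_intros)
  obtain v where v: "v \<in> sphere (0::real^'n) 1" "\<forall>w\<in>sphere 0 1. (\<Sum>i\<in>J. (x i \<bullet> v)\<^sup>2) \<le> (\<Sum>i\<in>J. (x i \<bullet> w)\<^sup>2)"
    using continuous_attains_inf[OF compact_sphere sphere_ne cont] by blast
  then show ?thesis using q_pos[OF J sp v(1)] by blast
qed

lemma m_pos:
  fixes x :: "nat \<Rightarrow> real^'n"
  assumes all: "\<forall>u\<in>sphere 0 1. span (x ` I_u N y x u) = UNIV"
  shows "m_const N y x > 0"
proof -
  define S where "S = {J. J \<subseteq> {..<N} \<and> span (x ` J) = UNIV}"
  have finS: "finite S" unfolding S_def by (rule finite_subset[of _ "Pow {..<N}"]) auto
  have IS: "I_u N y x u \<in> S" if "u \<in> sphere 0 1" for u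
    using all that by (auto simp: S_def I_u_def)
  obtain u0 :: "real^'n" where "u0 \<in> sphere 0 1" using sphere_ne by blast
  then have Sne: "S \<noteq> {}" using IS by blast
  have "\<forall>J\<in>S. \<exists>c>0. \<forall>w\<in>sphere 0 1. c \<le> (\<Sum>i\<in>J. (x i \<bullet> w)\<^sup>2)"
  proof
    fix J assume "J \<in> S"
    then have "finite J" "span (x ` J) = UNIV" unfolding S_def by (auto intro: finite_subset)
    then show "\<exists>c>0. \<forall>w\<in>sphere 0 1. c \<le> (\<Sum>i\<in>J. (x i \<bullet> w)\<^sup>2)" by (rule q_min)
  qed
  then obtain cf where cf: "\<forall>J\<in>S. cf J > 0 \<and> (\<forall>w\<in>sphere 0 1. cf J \<le> (\<Sum>i\<in>J. (x i \<bullet> w)\<^sup>2))"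
    by metis
  define c0 where "c0 = Min (cf ` S)"
  have c0: "c0 > 0" unfolding c0_def using finS Sne cf by (subst Min_gr_iff) auto
  have c0le: "c0 \<le> cf J" if "J \<in> S" for J unfolding c0_def using finS that by (intro Min_le) auto
  have "(2 / pi) * c0 \<le> m_const N y x"
    unfolding m_const_def
  proof (rule cINF_greatest)
    fix \<theta> :: "real^'n"
    obtain v where v: "v \<in> sphere 0 1" "(2 / pi) * (\<Sum>i\<in>Jt N y x \<theta>. (x i \<bullet> v)\<^sup>2) \<le> lambda_min (hess N y x \<theta>)"
      using lmin_lower by blast
    obtain u where u: "u \<in> sphere 0 1" "I_u N y x u \<subseteq> Jt N y x \<theta>" using J_contains by blast
    have "c0 \<le> cf (I_u N y x u)" using c0le IS[OF u(1)] by blast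
    also have "\<dots> \<le> (\<Sum>i\<in>I_u N y x u. (x i \<bullet> v)\<^sup>2)" using cf IS[OF u(1)] v(1) by blast
    also have "\<dots> \<le> (\<Sum>i\<in>Jt N y x \<theta>. (x i \<bullet> v)\<^sup>2)"
      by (rule sum_mono2) (use u(2) in \<open>auto simp: Jt_def\<close>)
    finally have "(2 / pi) * c0 \<le> (2 / pi) * (\<Sum>i\<in>Jt N y x \<theta>. (x i \<bullet> v)\<^sup>2)"
      by (rule mult_left_mono) simp
    then show "(2 / pi) * c0 \<le> lambda_min (hess N y x \<theta>)" using v(2) by linarith
  qed simp
  moreover have "(2 / pi) * c0 > 0" using c0 by simp
  ultimately show ?thesis by linarith
qed



lemma cond_fin: "cond_num N y x < \<infinity> \<longleftrightarrow> m_const N y x \<noteq> 0"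
  unfolding cond_num_def by auto

lemma part1:
  fixes x :: "nat \<Rightarrow> real^'n"
  shows "cond_num N y x < \<infinity> \<longleftrightarrow> (\<forall>u\<in>sphere 0 1. span (x ` I_u N y x u) = UNIV)"
proof
  assume "cond_num N y x < \<infinity>"
  then have m: "m_const N y x \<noteq> 0" using cond_fin by blast
  show "\<forall>u\<in>sphere 0 1. span (x ` I_u N y x u) = UNIV"
  proof (rule ccontr)
    assume "\<not> (\<forall>u\<in>sphere 0 1. span (x ` I_u N y x u) = UNIV)"
    then obtain u where "u \<in> sphere 0 1" "span (x ` I_u N y x u) \<noteq> UNIV" by blast
    then have "m_const N y x = 0" by (rule m_zero)
    then show False using m by simp
  qed
next
  assume "\<forall>u\<in>sphere 0 1. span (x ` I_u N y x u) = UNIV"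
  then have "m_const N y x > 0" by (rule m_pos)
  then show "cond_num N y x < \<infinity>" using cond_fin by (metis less_irrefl)
qed

lemma card_Iu: "(\<Sum>i<N. (indicator {..0::real} (y i * (x i \<bullet> u)) :: nat)) = card (I_u N y x u)"
proof -
  have "I_u N y x u = {i \<in> {..<N}. y i * (x i \<bullet> u) \<le> 0}" by (auto simp: I_u_def)
  then have "card (I_u N y x u) = (\<Sum>i\<in>{i \<in> {..<N}. y i * (x i \<bullet> u) \<le> 0}. 1)" by simp
  also have "\<dots> = (\<Sum>i<N. if y i * (x i \<bullet> u) \<le> 0 then 1 else 0)" by (rule sum.inter_filter) simp
  also have "\<dots> = (\<Sum>i<N. (indicator {..0::real} (y i * (x i \<bullet> u)) :: nat))"
    by (intro sum.cong) (auto simp: indicator_def)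
  finally show ?thesis by simp
qed

lemma sstar_eq: "s_star N y x = (INF u\<in>(sphere 0 1 :: (real^'n) set). card (I_u N y x u))"
  for x :: "nat \<Rightarrow> real^'n"
  unfolding s_star_def card_Iu ..

lemma sstar_le:
  fixes x :: "nat \<Rightarrow> real^'n"
  assumes "u \<in> sphere 0 1" shows "s_star N y x \<le> card (I_u N y x u)"
  unfolding sstar_eq by (rule cINF_lower) (use assms in \<open>auto intro: bdd_belowI[of _ 0]\<close>)

lemma sstar_att:
  fixes x :: "nat \<Rightarrow> real^'n"
  shows "\<exists>u\<in>sphere 0 1. s_star N y x = card (I_u N y x u)"
proof -
  have "(\<lambda>u. card (I_u N y x u)) ` (sphere 0 1 :: (real^'n) set) \<noteq> {}" using sphere_ne by blast
  then have "Inf ((\<lambda>u. card (I_u N y x u)) ` (sphere 0 1 :: (real^'n) set)) \<in> (\<lambda>u. card (I_u N y x u)) ` (sphere 0 1 :: (real^'n) set)"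
    by (rule Inf_nat_def1)
  then show ?thesis unfolding sstar_eq by auto
qed

lemma card_span:
  fixes x :: "nat \<Rightarrow> real^'n"
  assumes "finite I" "span (x ` I) = UNIV"
  shows "CARD('n) \<le> card I"
proof -
  have "dim (UNIV :: (real^'n) set) \<le> card (x ` I)"
    by (rule dim_le_card) (use assms in auto)
  also have "\<dots> \<le> card I" by (rule card_image_le[OF assms(1)])
  finally show ?thesis by simp
qed

lemma Iu_sub: "I_u N y x u \<subseteq> {..<N}" by (auto simp: I_u_def)

lemma part2:
  fixes x :: "nat \<Rightarrow> real^'n"
  assumes H: "\<forall>I. I \<subseteq> {..<N} \<and> card I > CARD('n) - 1 \<longrightarrow> span (x ` I) = UNIV"
  shows "cond_num N y x < \<infinity> \<longleftrightarrow> s_star N y x > CARD('n) - 1"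
proof
  assume "cond_num N y x < \<infinity>"
  then have all: "\<forall>u\<in>sphere 0 1. span (x ` I_u N y x u) = UNIV" using part1 by blast
  obtain u where u: "u \<in> sphere 0 1" "s_star N y x = card (I_u N y x u)" using sstar_att by blast
  have "CARD('n) \<le> card (I_u N y x u)"
    by (rule card_span) (use all u in \<open>auto intro: finite_subset[OF Iu_sub]\<close>)
  moreover have "CARD('n) > 0" by simp
  ultimately show "s_star N y x > CARD('n) - 1" using u(2) by arith
next
  assume s: "s_star N y x > CARD('n) - 1"
  have "\<forall>u\<in>sphere 0 1. span (x ` I_u N y x u) = UNIV"
  proof
    fix u :: "real^'n" assume "u \<in> sphere 0 1"
    then have "card (I_u N y x u) > CARD('n) - 1" using sstar_le[of u N y x] s by linarith
    then show "span (x ` I_u N y x u) = UNIV" using H Iu_sub by blast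
  qed
  then show "cond_num N y x < \<infinity>" using part1 by blast
qed

lemma F_ne: "s \<le> N \<Longrightarrow> {I. I \<subseteq> {..<N} \<and> card I = s} \<noteq> {}"
  using obtain_subset_with_card_n[of s "{..<N}"] by auto

lemma sstar_leN:
  fixes x :: "nat \<Rightarrow> real^'n"
  shows "s_star N y x \<le> N"
proof -
  obtain u :: "real^'n" where u: "u \<in> sphere 0 1" using sphere_ne by blast
  have "s_star N y x \<le> card (I_u N y x u)" by (rule sstar_le[OF u])
  also have "\<dots> \<le> card {..<N}" by (rule card_mono[OF _ Iu_sub]) simp
  finally show ?thesis by simp
qed

lemma P_nonneg: "s \<le> N \<Longrightarrow> 0 \<le> P_fun N x s"
  for x :: "nat \<Rightarrow> real^'n"
proof -
  assume sN: "s \<le> N"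
  have fin: "finite {I. I \<subseteq> {..<N} \<and> card I = s}" by (rule finite_subset[of _ "Pow {..<N}"]) auto
  show ?thesis
    unfolding P_fun_def
  proof (rule cINF_greatest)
    show "sphere (0::real^'n) 1 \<noteq> {}" by (rule sphere_ne)
    fix v :: "real^'n" assume "v \<in> sphere 0 1"
    show "0 \<le> Min ((\<lambda>I. \<Sum>i\<in>I. \<bar>x i \<bullet> v\<bar>\<^sup>2) ` {I. I \<subseteq> {..<N} \<and> card I = s})"
      using fin F_ne[OF sN] by (subst Min_ge_iff) (auto intro: sum_nonneg)
  qed
qed

lemma m_ge_P:
  fixes x :: "nat \<Rightarrow> real^'n"
  shows "(2 / pi) * P_fun N x (s_star N y x) \<le> m_const N y x"
proof -
  define s where "s = s_star N y x"
  define F where "F = {I. I \<subseteq> {..<N} \<and> card I = s}"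
  have Fne: "F \<noteq> {}" unfolding F_def s_def by (rule F_ne[OF sstar_leN])
  have finF: "finite F" unfolding F_def by (rule finite_subset[of _ "Pow {..<N}"]) auto
  have bdd: "bdd_below ((\<lambda>v. Min ((\<lambda>I. \<Sum>i\<in>I. \<bar>x i \<bullet> v\<bar>\<^sup>2) ` F)) ` sphere 0 1)"
  proof (rule bdd_belowI[of _ 0])
    fix t assume "t \<in> (\<lambda>v. Min ((\<lambda>I. \<Sum>i\<in>I. \<bar>x i \<bullet> v\<bar>\<^sup>2) ` F)) ` sphere 0 1"
    then obtain v where "t = Min ((\<lambda>I. \<Sum>i\<in>I. \<bar>x i \<bullet> v\<bar>\<^sup>2) ` F)" by blast
    then show "0 \<le> t" using finF Fne by (simp add: Min_ge_iff sum_nonneg)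
  qed
  show ?thesis
    unfolding m_const_def
  proof (rule cINF_greatest)
    fix \<theta> :: "real^'n"
    obtain v where v: "v \<in> sphere 0 1" "(2 / pi) * (\<Sum>i\<in>Jt N y x \<theta>. (x i \<bullet> v)\<^sup>2) \<le> lambda_min (hess N y x \<theta>)"
      using lmin_lower by blast
    obtain u where u: "u \<in> sphere 0 1" "I_u N y x u \<subseteq> Jt N y x \<theta>" using J_contains by blast
    have finJ: "finite (Jt N y x \<theta>)" by (rule finite_subset[of _ "{..<N}"]) (auto simp: Jt_def)
    have "s \<le> card (I_u N y x u)" unfolding s_def by (rule sstar_le[OF u(1)])
    also have "\<dots> \<le> card (Jt N y x \<theta>)" by (rule card_mono[OF finJ u(2)])
    finally obtain K where K: "K \<subseteq> Jt N y x \<theta>" "card K = s" using obtain_subset_with_card_n by metis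
    have KF: "K \<in> F" using K by (auto simp: F_def Jt_def)
    have "P_fun N x s \<le> Min ((\<lambda>I. \<Sum>i\<in>I. \<bar>x i \<bullet> v\<bar>\<^sup>2) ` F)"
      unfolding P_fun_def F_def[symmetric] by (rule cINF_lower[OF bdd v(1)])
    also have "\<dots> \<le> (\<Sum>i\<in>K. \<bar>x i \<bullet> v\<bar>\<^sup>2)" using finF KF by (intro Min_le) auto
    also have "\<dots> = (\<Sum>i\<in>K. (x i \<bullet> v)\<^sup>2)" by simp
    also have "\<dots> \<le> (\<Sum>i\<in>Jt N y x \<theta>. (x i \<bullet> v)\<^sup>2)" by (rule sum_mono2[OF finJ K(1)]) simp
    finally have "(2 / pi) * P_fun N x s \<le> (2 / pi) * (\<Sum>i\<in>Jt N y x \<theta>. (x i \<bullet> v)\<^sup>2)"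
      by (rule mult_left_mono) simp
    then show "(2 / pi) * P_fun N x (s_star N y x) \<le> lambda_min (hess N y x \<theta>)"
      using v(2) unfolding s_def by linarith
  qed simp
qed

lemma part3:
  fixes x :: "nat \<Rightarrow> real^'n"
  shows "cond_num N y x \<le>
           (if P_fun N x (s_star N y x) = 0 then \<infinity>
            else ereal (pi / 2 * lambda_max (\<Sum>i<N. outer (x i)) / P_fun N x (s_star N y x)))"
proof (cases "P_fun N x (s_star N y x) = 0")
  case True then show ?thesis by simp
next
  case False
  define P where "P = P_fun N x (s_star N y x)"
  define lam where "lam = lambda_max (\<Sum>i<N. outer (x i))"
  define m where "m = m_const N y x"
  define L where "L = L_const N y x"
  have "0 \<le> P_fun N x (s_star N y x)" by (rule P_nonneg[OF sstar_leN])
  then have P: "P > 0" using False by (simp add: P_def)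
  have mP: "(2 / pi) * P \<le> m" unfolding P_def m_def by (rule m_ge_P)
  have P2: "(2 / pi) * P > 0" using P by simp
  have m: "m > 0" using mP P2 by linarith
  have lam: "lam \<ge> 0" unfolding lam_def by (rule lmaxS_nonneg)
  have L: "L \<le> lam" unfolding L_def lam_def by (rule L_le)
  have "L / m \<le> lam / m" using L m by (intro divide_right_mono) auto
  also have "\<dots> \<le> lam / ((2 / pi) * P)"
  proof (rule divide_left_mono[OF mP lam])
    show "0 < m * ((2 / pi) * P)" using m P2 by (rule mult_pos_pos)
  qed
  also have "\<dots> = pi / 2 * lam / P" by (simp add: field_simps)
  finally have "L / m \<le> pi / 2 * lam / P" .
  moreover have "cond_num N y x = ereal (L / m)" using m by (simp add: cond_num_def m_def L_def)
  ultimately show ?thesis using False by (simp add: P_def lam_def)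
qed

theorem theorem2p1:
  fixes N :: nat and y :: "nat \<Rightarrow> real" and x :: "nat \<Rightarrow> real^'n"
  assumes "N \<ge> 1" and "CARD('n) \<ge> 2"
    and "\<forall>i<N. y i \<in> {-1, 1}"
  shows "(cond_num N y x < \<infinity> \<longleftrightarrow>
            (\<forall>u\<in>sphere 0 1. span (x ` I_u N y x u) = UNIV))
         \<and> ((\<forall>I. I \<subseteq> {..<N} \<and> card I > CARD('n) - 1 \<longrightarrow> span (x ` I) = UNIV) \<longrightarrow>
           (cond_num N y x < \<infinity> \<longleftrightarrow> s_star N y x > CARD('n) - 1))
         \<and> cond_num N y x \<le>
           (if P_fun N x (s_star N y x) = 0 then \<infinity>
            else ereal (pi / 2 * lambda_max (\<Sum>i<N. outer (x i)) / P_fun N x (s_star N y x)))"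
  using part1[of N y x] part2[of N x y] part3[of N y x] by blast

end
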